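(* Let $v$ be a nonzero integer, $t$ a positive rational number, and $f(a)=(a^v,q^t/a^v;q^t)_\infty$. Suppose that $f(aq^\alpha)=\dfrac{1}{(-1)^\rho a^w q^s}f(a)$ for some $\alpha,w\in\mathbb Z$, $\rho\in\{0,1\}$, $s\in\mathbb Q$. Then $v$ divides $w$, and $\alpha v$ is an integer multiple of $t$.
   Context: $|q|<1$ and $(x;q)_\infty=\prod_{k\ge0}(1-xq^k)$, $(x,y;q)_\infty=(x;q)_\infty(y;q)_\infty$. *)

theory Defs
  imports "HOL-Analysis.Analysis"
begin

definition qpoch :: "complex \<Rightarrow> complex \<Rightarrow> complex" where
  "qpoch x q = (\<Prod>k. 1 - x * q ^ k)"

definition ftheta :: "int \<Rightarrow> rat \<Rightarrow> complex \<Rightarrow> complex \<Rightarrow> complex" where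
  "ftheta v t q a =
     qpoch (a powi v) (q powr of_real (of_rat t)) *
     qpoch (q powr of_real (of_rat t) / a powi v) (q powr of_real (of_rat t))"

end

theory Submission
  imports Defs
begin

lemma qpoch_zero_iff:
  assumes "norm p < 1"
  shows "qpoch x p = 0 \<longleftrightarrow> (\<exists>k. x * p ^ k = 1)"
proof -
  let ?f = "\<lambda>k. 1 - x * p ^ k"
  have "summable (\<lambda>k. norm x * norm p ^ k)"
    using assms by (intro summable_mult summable_geometric) auto
  hence "summable (\<lambda>k. norm (?f k - 1))"
    by (simp add: norm_mult norm_power)
  hence "abs_convergent_prod ?f" by (rule summable_imp_abs_convergent_prod)
  hence "convergent_prod ?f" by (rule abs_convergent_prod_imp_convergent_prod)
  hence "?f has_prod qpoch x p" unfolding qpoch_def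
    using convergent_prod_has_prod_iff by blast
  from has_prod_eq_0_iff[OF this] show ?thesis
    by (auto simp: eq_commute[of 0] right_minus_eq)
qed

lemma powi_exp_Ln:
  assumes "(q::complex) \<noteq> 0"
  shows "q powi n = exp (of_int n * Ln q)"
proof -
  have "q powi n = exp (Ln q) powi n" using assms by simp
  also have "\<dots> = exp (of_int n * Ln q)" by (rule exp_power_int)
  finally show ?thesis .
qed

lemma exp_eq_Re:
  assumes "exp (z1::complex) = exp z2" shows "Re z1 = Re z2"
proof -
  have "norm (exp z1) = norm (exp z2)" using assms by simp
  thus ?thesis by simp
qed

theorem lemma2p2:
  fixes q :: complex and v \<alpha> w :: int and t s :: rat and \<rho> :: nat
  assumes "0 < norm q" and "norm q < 1"
    and "v \<noteq> 0" and "t > 0" and "\<rho> \<in> {0, 1}"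
    and "\<forall>a::complex. a \<noteq> 0 \<longrightarrow>
           ftheta v t q (a * q powi \<alpha>) =
           ftheta v t q a / ((-1) ^ \<rho> * a powi w * q powr of_real (of_rat s))"
  shows "v dvd w \<and> (\<exists>k::int. of_int (\<alpha> * v) = of_int k * t)"
proof -
  have q0: "q \<noteq> 0" using assms(1) by auto
  define L where "L = Ln q"
  define tr where "tr = (of_rat t :: real)"
  define p where "p = q powr of_real tr"
  have p_exp: "p = exp (of_real tr * L)" unfolding p_def L_def powr_def using q0 by simp
  have ReL: "Re L = ln (norm q)" unfolding L_def using q0 by simp
  have ReL_neg: "Re L < 0" unfolding ReL using assms(1,2) by simp
  have tr_pos: "tr > 0" unfolding tr_def using assms(4) by simp
  have np: "norm p < 1" unfolding p_exp using ReL_neg tr_pos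
    by (simp add: mult_pos_neg)
  have pnz: "p \<noteq> 0" unfolding p_exp by simp
  have pk: "p ^ k = exp (of_nat k * (of_real tr * L))" for k
    unfolding p_exp by (simp add: exp_of_nat_mult)
  define G where "G x = qpoch x p * qpoch (p / x) p" for x
  have fG: "ftheta v t q a = G (a powi v)" for a
    unfolding ftheta_def G_def p_def tr_def by simp
  have Snz: "q powr of_real (of_rat s) \<noteq> 0" using q0 by (simp add: powr_def)
  define Q where "Q = q powi (\<alpha> * v)"
  have Qexp: "Q = exp (of_int (\<alpha> * v) * L)" unfolding Q_def L_def using powi_exp_Ln[OF q0] by simp
  have Qa: "(a * q powi \<alpha>) powi v = a powi v * Q" for a
    unfolding Q_def by (simp add: power_int_mult_distrib power_int_mult)
  have "qpoch 1 p = 0" using qpoch_zero_iff[OF np, of 1] by (metis mult_1 power_0)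
  hence G1: "G 1 = 0" unfolding G_def by simp
  have "G Q = 0" using assms(6)[rule_format, of 1] fG[of 1] fG[of "1 * q powi \<alpha>"] Qa[of 1] G1
    by simp
  hence "qpoch Q p = 0 \<or> qpoch (p / Q) p = 0" unfolding G_def by simp
  hence part2: "\<exists>k::int. of_int (\<alpha> * v) = of_int k * t"
  proof
    assume "qpoch Q p = 0"
    then obtain k where k: "Q * p ^ k = 1" using qpoch_zero_iff[OF np] by auto
    hence "exp (of_int (\<alpha> * v) * L + of_nat k * (of_real tr * L)) = exp 0"
      unfolding Qexp pk by (simp add: exp_add)
    from exp_eq_Re[OF this] have "(of_int (\<alpha> * v) + of_nat k * tr) * Re L = 0"
      by (simp add: algebra_simps)
    hence "of_int (\<alpha> * v) + of_nat k * tr = 0" using ReL_neg by simp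
    hence "(of_rat (of_int (\<alpha> * v)) :: real) = of_rat (of_int (- int k) * t)"
      unfolding tr_def by (simp add: of_rat_mult of_rat_minus)
    hence "of_int (\<alpha> * v) = of_int (- int k) * t" by (simp only: of_rat_eq_iff)
    thus ?thesis by blast
  next
    assume "qpoch (p / Q) p = 0"
    then obtain k where k: "p / Q * p ^ k = 1" using qpoch_zero_iff[OF np] by auto
    have Qnz: "Q \<noteq> 0" unfolding Qexp by simp
    have "p ^ Suc k = Q" using k Qnz by (simp add: field_simps)
    hence "exp (of_nat (Suc k) * (of_real tr * L)) = exp (of_int (\<alpha> * v) * L)"
      unfolding Qexp pk by simp
    from exp_eq_Re[OF this] have "(of_nat (Suc k) * tr - of_int (\<alpha> * v)) * Re L = 0"
      by (simp add: algebra_simps)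
    hence "of_nat (Suc k) * tr - of_int (\<alpha> * v) = 0" using ReL_neg by simp
    hence "(of_rat (of_int (\<alpha> * v)) :: real) = of_rat (of_int (int (Suc k)) * t)"
      unfolding tr_def by (simp add: of_rat_mult of_rat_add)
    hence "of_int (\<alpha> * v) = of_int (int (Suc k)) * t" by (simp only: of_rat_eq_iff)
    thus ?thesis by blast
  qed
  define a where "a = exp (\<i> * of_real pi / of_int v)"
  define z where "z = exp (2 * \<i> * of_real pi / of_int v)"
  have av: "a powi v = -1" unfolding a_def exp_power_int using assms(3) by simp
  have zv: "z powi v = 1" unfolding z_def exp_power_int using assms(3) by (simp add: exp_eq_1)
  have a0: "a \<noteq> 0" and z0: "z \<noteq> 0" unfolding a_def z_def by auto
  have Gm1: "G (-1) \<noteq> 0"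
  proof -
    have "qpoch (-1) p \<noteq> 0"
    proof
      assume "qpoch (-1) p = 0"
      then obtain k where k: "-1 * p ^ k = 1" using qpoch_zero_iff[OF np] by auto
      have "p ^ k = - (-1 * p ^ k)" by simp
      hence "p ^ k = -1" using k by (metis minus_minus mult_minus1)
      hence "norm (p ^ k) = 1" by simp
      moreover have "k \<noteq> 0"
      proof
        assume "k = 0" with k show False by simp
      qed
      moreover have "norm p ^ k < 1"
      proof -
        obtain m where "k = Suc m" using \<open>k \<noteq> 0\<close> not0_implies_Suc by blast
        thus ?thesis using np pnz power_Suc_less_one[of "norm p" m] by simp
      qed
      ultimately show False by (simp add: norm_power)
    qed
    moreover have "qpoch (p / -1) p \<noteq> 0"
    proof
      assume "qpoch (p / -1) p = 0"
      then obtain k where k: "p / -1 * p ^ k = 1" using qpoch_zero_iff[OF np] by auto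
      hence "norm (p ^ Suc k) = 1" proof -
        have "p / -1 * p ^ k = - (p ^ Suc k)" by simp
        hence "p ^ Suc k = -1" using k by (metis minus_minus)
        thus ?thesis by simp
      qed
      moreover have "norm p ^ Suc k < 1" using np pnz power_Suc_less_one[of "norm p" k] by simp
      ultimately show False by (simp add: norm_power norm_mult)
    qed
    ultimately show ?thesis unfolding G_def by simp
  qed
  define D where "D b = (-1) ^ \<rho> * b powi w * q powr of_real (of_rat s)" for b :: complex
  have e1: "G (-1 * Q) = G (-1) / D a"
    using assms(6)[rule_format, OF a0] unfolding fG Qa av D_def .
  have "a * z \<noteq> 0" using a0 z0 by simp
  from assms(6)[rule_format, OF this] have e2: "G (-1 * Q) = G (-1) / D (a * z)"
    unfolding fG Qa D_def by (simp add: power_int_mult_distrib av zv)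
  have Da: "D a \<noteq> 0" unfolding D_def using Snz a0 by simp
  have Daz: "D (a * z) \<noteq> 0" unfolding D_def using Snz a0 z0 by simp
  have "D a = D (a * z)" by (metis e1 e2 Gm1 divide_cancel_left)
  hence "z powi w = 1" unfolding D_def using Snz a0
    by (simp add: power_int_mult_distrib)
  hence "exp (of_int w * (2 * \<i> * of_real pi / of_int v)) = 1"
    unfolding z_def exp_power_int .
  then obtain n :: int where n: "2 * pi * w / v = of_int (2 * n) * pi"
    unfolding exp_eq_1 by (auto simp: mult.commute mult.left_commute)
  hence "real_of_int w = of_int n * of_int v" using assms(3)
    by (simp add: field_simps)
  hence "w = n * v" by (metis of_int_eq_iff of_int_mult)
  hence "v dvd w" by simp
  with part2 show ?thesis by blast
qed

end
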